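(* Let $\mathcal{D}=(D,<,\approx)$ with $D$ infinite, $<$ a strict total order, and $\mathcal{D}$ dense and open. Let $l,r\in\mathbb{N}$. Then for every $(l,r)$-symbolic model $\rho$, the local projection $\rho_l$ is realized by some local model; that is, there is an infinite sequence $\sigma_l$ of maps $V_{\mathrm{local}}\to D$ with $\rho(i)\cap\Omega^l=\{c\in\Omega^l:\sigma_l,i\models c\}$ for all $i\in\mathbb{N}$.
   Context: $\mathcal{D}$ is dense if for all $d<d''$ in $D$ there is $d'$ with $d<d'<d''$. It is open if every $d'\in D$ has some $d<d'<d''$ in $D$. $V=V_{\mathrm{local}}\uplus V_{\mathrm{remote}}$ is a disjoint union of finite variable sets. Constraint semantics: - $\sigma,n\models\mathbf{X}^ix\approx\mathbf{X}^jy$ iff $\sigma(n+i)(x)=\sigma(n+j)(y)$. - $\sigma,n\models\mathbf{X}^ix<\mathbf{X}^jy$ iff $\sigma(n+i)(x)<\sigma(n+j)(y)$. - $\sigma,n\models\mathbf{X}^i(x\approx\mathbf{XF}y)$ iff there is $k>n+i$ with $\sigma(n+i)(x)=\sigma(k)(y)$. $\Omega^l$ is the set of all $\mathbf{X}^ix\approx\mathbf{X}^jy$ and $\mathbf{X}^ix<\mathbf{X}^jy$ with $x,y\in V_{\mathrm{local}}$ and $i,j\in\{0,\dots,l\}$. $\Omega^r$ is the set of all $\mathbf{X}^ix\approx\mathbf{X}^jy$ and $\mathbf{X}^i(x\approx\mathbf{XF}y)$ with $x,y\in V_{\mathrm{remote}}$ and $i,j\in\{0,\dots,r\}$. An $l$-frame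 is a set $\{c\in\Omega^l:\sigma_l,0\models c\}$ for some infinite sequence $\sigma_l$ of maps $V_{\mathrm{local}}\to D$. An $r$-frame is a set $FR\subseteq\Omega^r$ satisfying the following conditions, for all remote variables and indices $\le r$. 1. $\mathbf{X}^ix\approx\mathbf{X}^ix\in FR$. 2. $\approx$-constraints in $FR$ are symmetric. 3. $\approx$-constraints in $FR$ are transitive. 4. Suppose $\mathbf{X}^ix\approx\mathbf{X}^jy\in FR$. - If $i=j$, then $\mathbf{X}^i(x\approx\mathbf{XF}z)\in FR$ iff $\mathbf{X}^j(y\approx\mathbf{XF}z)\in FR$. - If $i<j$, then $\mathbf{X}^i(x\approx\mathbf{XF}y)\in FR$. Moreover, $\mathbf{X}^i(x\approx\mathbf{XF}z)\in FR$ iff either $\mathbf{X}^j(y\approx\mathbf{XF}z)\in FR$ or $\mathbf{X}^ix\approx\mathbf{X}^{j'}z\in FR$ for some $i<j'\le j$. An $(l,r)$-frame is the union of an $l$-frame and an $r$-frame. A pair $(FR_1,FR_2)$ of $(l,r)$-frames is one-step consistent if, for all variables and all $0<i,j$ (within range): - $\mathbf{X}^ix\approx\mathbf{X}^jy\in FR_1$ iff $\mathbf{X}^{i-1}x\approx\mathbf{X}^{j-1}y\in FR_2$; - $\mathbf{X}^ix<\mathbf{X}^jy\in FR_1$ iff $\mathbf{X}^{i-1}x<\mathbf{X}^{j-1}y\in FR_2$; - $\mathbf{X}^i(x\approx\mathbf{XF}y)\in FR_1$ iff $\mathbf{X}^{i-1}(x\approx\mathbf{XF}y)\in FR_2$.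 An $(l,r)$-symbolic model is an infinite sequence of $(l,r)$-frames with each consecutive pair one-step consistent. Its local projection is $\rho_l(i)=\rho(i)\cap\Omega^l$. *)

theory Defs
  imports Main
begin

text \<open>Constraints over variables of type 'v.
  CEq i x j y   stands for  X^i x \<approx> X^j y,
  CLess i x j y stands for  X^i x < X^j y,
  CEqF i x y    stands for  X^i (x \<approx> XF y).\<close>

datatype 'v constr =
    CEq nat 'v nat 'v
  | CLess nat 'v nat 'v
  | CEqF nat 'v 'v

text \<open>Satisfaction of a constraint by a sequence of valuations at position n.
  The relation \<approx> of the domain is equality.\<close>

fun sat :: "(nat \<Rightarrow> 'v \<Rightarrow> 'd::linorder) \<Rightarrow> nat \<Rightarrow> 'v constr \<Rightarrow> bool" where
  "sat \<sigma> n (CEq i x j y) = (\<sigma> (n + i) x = \<sigma> (n + j) y)"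
| "sat \<sigma> n (CLess i x j y) = (\<sigma> (n + i) x < \<sigma> (n + j) y)"
| "sat \<sigma> n (CEqF i x y) = (\<exists>k > n + i. \<sigma> (n + i) x = \<sigma> k y)"

definition dense_dom :: "'d::linorder itself \<Rightarrow> bool" where
  "dense_dom _ = (\<forall>a b :: 'd. a < b \<longrightarrow> (\<exists>c. a < c \<and> c < b))"

definition open_dom :: "'d::linorder itself \<Rightarrow> bool" where
  "open_dom _ = (\<forall>d :: 'd. \<exists>a b. a < d \<and> d < b)"

definition Omega_l :: "'v set \<Rightarrow> nat \<Rightarrow> 'v constr set" where
  "Omega_l Vl l =
     {CEq i x j y | i x j y. x \<in> Vl \<and> y \<in> Vl \<and> i \<le> l \<and> j \<le> l} \<union>
     {CLess i x j y | i x j y. x \<in> Vl \<and> y \<in> Vl \<and> i \<le> l \<and> j \<le> l}"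

definition Omega_r :: "'v set \<Rightarrow> nat \<Rightarrow> 'v constr set" where
  "Omega_r Vr r =
     {CEq i x j y | i x j y. x \<in> Vr \<and> y \<in> Vr \<and> i \<le> r \<and> j \<le> r} \<union>
     {CEqF i x y | i x y. x \<in> Vr \<and> y \<in> Vr \<and> i \<le> r}"

definition l_frame :: "'d::linorder itself \<Rightarrow> 'v set \<Rightarrow> nat \<Rightarrow> 'v constr set \<Rightarrow> bool" where
  "l_frame _ Vl l F =
     (\<exists>\<sigma> :: nat \<Rightarrow> 'v \<Rightarrow> 'd. F = {c \<in> Omega_l Vl l. sat \<sigma> 0 c})"

definition r_frame :: "'v set \<Rightarrow> nat \<Rightarrow> 'v constr set \<Rightarrow> bool" where
  "r_frame Vr r FR =
     (FR \<subseteq> Omega_r Vr r \<and>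
      (\<forall>x\<in>Vr. \<forall>i\<le>r. CEq i x i x \<in> FR) \<and>
      (\<forall>x\<in>Vr. \<forall>y\<in>Vr. \<forall>i\<le>r. \<forall>j\<le>r.
          CEq i x j y \<in> FR \<longrightarrow> CEq j y i x \<in> FR) \<and>
      (\<forall>x\<in>Vr. \<forall>y\<in>Vr. \<forall>z\<in>Vr. \<forall>i\<le>r. \<forall>j\<le>r. \<forall>k\<le>r.
          CEq i x j y \<in> FR \<longrightarrow> CEq j y k z \<in> FR \<longrightarrow> CEq i x k z \<in> FR) \<and>
      (\<forall>x\<in>Vr. \<forall>y\<in>Vr. \<forall>i\<le>r. \<forall>j\<le>r. CEq i x j y \<in> FR \<longrightarrow>
          ((i = j \<longrightarrow> (\<forall>z\<in>Vr. CEqF i x z \<in> FR \<longleftrightarrow> CEqF j y z \<in> FR)) \<and>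
           (i < j \<longrightarrow> CEqF i x y \<in> FR \<and>
              (\<forall>z\<in>Vr. CEqF i x z \<in> FR \<longleftrightarrow>
                 (CEqF j y z \<in> FR \<or> (\<exists>j'. i < j' \<and> j' \<le> j \<and> CEq i x j' z \<in> FR)))))))"

definition lr_frame :: "'d::linorder itself \<Rightarrow> 'v set \<Rightarrow> 'v set \<Rightarrow> nat \<Rightarrow> nat \<Rightarrow> 'v constr set \<Rightarrow> bool" where
  "lr_frame T Vl Vr l r F =
     (\<exists>A B. l_frame T Vl l A \<and> r_frame Vr r B \<and> F = A \<union> B)"

definition one_step_consistent ::
  "'v set \<Rightarrow> 'v set \<Rightarrow> nat \<Rightarrow> nat \<Rightarrow> 'v constr set \<Rightarrow> 'v constr set \<Rightarrow> bool" where
  "one_step_consistent Vl Vr l r F1 F2 =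
     (let \<Omega> = Omega_l Vl l \<union> Omega_r Vr r in
      (\<forall>x y i j. 0 < i \<and> 0 < j \<and> CEq i x j y \<in> \<Omega> \<longrightarrow>
         (CEq i x j y \<in> F1 \<longleftrightarrow> CEq (i - 1) x (j - 1) y \<in> F2)) \<and>
      (\<forall>x y i j. 0 < i \<and> 0 < j \<and> CLess i x j y \<in> \<Omega> \<longrightarrow>
         (CLess i x j y \<in> F1 \<longleftrightarrow> CLess (i - 1) x (j - 1) y \<in> F2)) \<and>
      (\<forall>x y i. 0 < i \<and> CEqF i x y \<in> \<Omega> \<longrightarrow>
         (CEqF i x y \<in> F1 \<longleftrightarrow> CEqF (i - 1) x y \<in> F2)))"

definition symbolic_model ::
  "'d::linorder itself \<Rightarrow> 'v set \<Rightarrow> 'v set \<Rightarrow> nat \<Rightarrow> nat \<Rightarrow> (nat \<Rightarrow> 'v constr set) \<Rightarrow> bool" where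
  "symbolic_model T Vl Vr l r \<rho> =
     (\<forall>n. lr_frame T Vl Vr l r (\<rho> n) \<and> one_step_consistent Vl Vr l r (\<rho> n) (\<rho> (Suc n)))"

end

theory Submission
  imports Defs
begin

lemma between_exists:
  fixes L U :: "'d::linorder set"
  assumes "dense_dom TYPE('d)" "open_dom TYPE('d)" "finite L" "finite U"
    "\<forall>a\<in>L. \<forall>b\<in>U. a < b"
  shows "\<exists>c. (\<forall>a\<in>L. a < c) \<and> (\<forall>b\<in>U. c < b)"
proof (cases "L = {}")
  case True
  show ?thesis
  proof (cases "U = {}")
    case True with \<open>L = {}\<close> show ?thesis by auto
  next
    case False
    obtain a where "a < Min U" using assms(2) unfolding open_dom_def by blast
    then have "\<forall>b\<in>U. a < b" using False assms(4) by (meson Min_le order_less_le_trans)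
    then show ?thesis using \<open>L = {}\<close> by blast
  qed
next
  case False
  show ?thesis
  proof (cases "U = {}")
    case True
    obtain b where "Max L < b" using assms(2) unfolding open_dom_def by blast
    then have "\<forall>a\<in>L. a < b" using False assms(3) by (meson Max_ge order_le_less_trans)
    then show ?thesis using \<open>U = {}\<close> by blast
  next
    case UF: False
    have "Max L < Min U" using assms False UF by simp
    then obtain c where "Max L < c" "c < Min U" using assms(1) unfolding dense_dom_def by blast
    then have "(\<forall>a\<in>L. a < c) \<and> (\<forall>b\<in>U. c < b)" using assms(3,4) False UF
      by (meson Max_ge Min_le order_le_less_trans order_less_le_trans)
    then show ?thesis by blast
  qed
qed

definition compat :: "('p \<Rightarrow> 'd::linorder) \<Rightarrow> ('p \<Rightarrow> 'd) \<Rightarrow> 'p set \<Rightarrow> bool" where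
  "compat u w S = (\<forall>p\<in>S. \<forall>q\<in>S. (u p = u q \<longleftrightarrow> w p = w q) \<and> (u p < u q \<longleftrightarrow> w p < w q))"

lemma compatD:
  "compat u w S \<Longrightarrow> p \<in> S \<Longrightarrow> q \<in> S \<Longrightarrow> (u p = u q \<longleftrightarrow> w p = w q) \<and> (u p < u q \<longleftrightarrow> w p < w q)"
  unfolding compat_def by simp

lemma extend_one:
  fixes u w :: "'p \<Rightarrow> 'd::linorder"
  assumes "dense_dom TYPE('d)" "open_dom TYPE('d)" "finite S" "compat u w S"
  shows "\<exists>w'. (\<forall>p\<in>S. w' p = w p) \<and> compat u w' (insert q S)"
proof (cases "q \<in> S")
  case True
  then have "insert q S = S" by blast
  then show ?thesis using assms(4) by (intro exI[of _ w]) simp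
next
  case qS: False
  have "\<exists>c. \<forall>p\<in>S. (u p = u q \<longleftrightarrow> w p = c) \<and> (u p < u q \<longleftrightarrow> w p < c) \<and> (u q < u p \<longleftrightarrow> c < w p)"
  proof (cases "\<exists>p\<in>S. u p = u q")
    case True
    then obtain p0 where p0: "p0 \<in> S" "u p0 = u q" by blast
    show ?thesis
    proof (rule exI[of _ "w p0"], intro ballI)
      fix p assume "p \<in> S"
      then have "(u p = u p0 \<longleftrightarrow> w p = w p0) \<and> (u p < u p0 \<longleftrightarrow> w p < w p0) \<and> (u p0 < u p \<longleftrightarrow> w p0 < w p)"
        using compatD[OF assms(4) _ p0(1)] compatD[OF assms(4) p0(1)] by blast
      then show "(u p = u q \<longleftrightarrow> w p = w p0) \<and> (u p < u q \<longleftrightarrow> w p < w p0) \<and> (u q < u p \<longleftrightarrow> w p0 < w p)"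
        using p0(2) by simp
    qed
  next
    case False
    define L where "L = w ` {p\<in>S. u p < u q}"
    define U where "U = w ` {p\<in>S. u q < u p}"
    have finL: "finite L" unfolding L_def using assms(3) by simp
    have finU: "finite U" unfolding U_def using assms(3) by simp
    have LU: "\<forall>a\<in>L. \<forall>b\<in>U. a < b"
    proof (intro ballI)
      fix a b assume "a \<in> L" "b \<in> U"
      then obtain p p' where "p \<in> S" "p' \<in> S" "u p < u q" "u q < u p'" "a = w p" "b = w p'"
        unfolding L_def U_def by blast
      then have "u p < u p'" by (meson order_less_trans)
      then have "w p < w p'" using compatD[OF assms(4) \<open>p \<in> S\<close> \<open>p' \<in> S\<close>] by simp
      then show "a < b" using \<open>a = w p\<close> \<open>b = w p'\<close> by simp
    qed
    then obtain c where c: "\<forall>a\<in>L. a < c" "\<forall>b\<in>U. c < b"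
      using between_exists[OF assms(1,2) finL finU LU] by blast
    show ?thesis
    proof (rule exI[of _ c], intro ballI)
      fix p assume p: "p \<in> S"
      have "u p \<noteq> u q" using False p by blast
      then have "u p < u q \<or> u q < u p" by auto
      then show "(u p = u q \<longleftrightarrow> w p = c) \<and> (u p < u q \<longleftrightarrow> w p < c) \<and> (u q < u p \<longleftrightarrow> c < w p)"
      proof
        assume "u p < u q"
        then have "w p \<in> L" using p unfolding L_def by blast
        then have "w p < c" using c by blast
        then show ?thesis using \<open>u p < u q\<close> by auto
      next
        assume "u q < u p"
        then have "w p \<in> U" using p unfolding U_def by blast
        then have "c < w p" using c by blast
        then show ?thesis using \<open>u q < u p\<close> by auto
      qed
    qed
  qed
  then obtain c where c: "\<forall>p\<in>S. (u p = u q \<longleftrightarrow> w p = c) \<and> (u p < u q \<longleftrightarrow> w p < c) \<and> (u q < u p \<longleftrightarrow> c < w p)"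
    by blast
  have "compat u (w(q := c)) (insert q S)"
    unfolding compat_def
  proof (intro ballI)
    fix p p' assume p: "p \<in> insert q S" "p' \<in> insert q S"
    show "(u p = u p' \<longleftrightarrow> (w(q := c)) p = (w(q := c)) p') \<and> (u p < u p' \<longleftrightarrow> (w(q := c)) p < (w(q := c)) p')"
    proof (cases "p = q")
      case True
      show ?thesis
      proof (cases "p' = q")
        case True with \<open>p = q\<close> show ?thesis by simp
      next
        case False
        then have "p' \<in> S" using p by blast
        then have "(u p' = u q \<longleftrightarrow> w p' = c) \<and> (u q < u p' \<longleftrightarrow> c < w p')" using c by blast
        then show ?thesis using True False by auto
      qed
    next
      case pF: False
      then have pS: "p \<in> S" using p by blast
      show ?thesis
      proof (cases "p' = q")
        case True
        have "(u p = u q \<longleftrightarrow> w p = c) \<and> (u p < u q \<longleftrightarrow> w p < c)" using c pS by blast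
        then show ?thesis using True pF by auto
      next
        case False
        then have "p' \<in> S" using p by blast
        then have "(u p = u p' \<longleftrightarrow> w p = w p') \<and> (u p < u p' \<longleftrightarrow> w p < w p')"
          using compatD[OF assms(4) pS] by blast
        then show ?thesis using pF False by simp
      qed
    qed
  qed
  then show ?thesis using qS by (intro exI[of _ "w(q := c)"]) auto
qed

lemma extend_set:
  fixes u w :: "'p \<Rightarrow> 'd::linorder"
  assumes "dense_dom TYPE('d)" "open_dom TYPE('d)" "finite R" "finite P" "compat u w P"
  shows "\<exists>w'. (\<forall>p\<in>P. w' p = w p) \<and> compat u w' (P \<union> R)"
  using assms(3)
proof (induction R rule: finite_induct)
  case empty then show ?case using assms(5) by (intro exI[of _ w]) simp
next
  case (insert q R)
  then obtain w1 where w1: "\<forall>p\<in>P. w1 p = w p" "compat u w1 (P \<union> R)" by blast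
  obtain w2 where w2: "\<forall>p\<in>P \<union> R. w2 p = w1 p" "compat u w2 (insert q (P \<union> R))"
    using extend_one[OF assms(1,2) _ w1(2)] assms(4) insert(1) by blast
  have e: "P \<union> insert q R = insert q (P \<union> R)" by blast
  have "\<forall>p\<in>P. w2 p = w p" using w1(1) w2(1) by simp
  then show ?case using w2(2) unfolding e by (intro exI[of _ w2]) simp
qed


lemma Omega_l_CEq: "x \<in> Vl \<Longrightarrow> y \<in> Vl \<Longrightarrow> i \<le> l \<Longrightarrow> j \<le> l \<Longrightarrow> CEq i x j y \<in> Omega_l Vl l"
  unfolding Omega_l_def by auto

lemma Omega_l_CLess: "x \<in> Vl \<Longrightarrow> y \<in> Vl \<Longrightarrow> i \<le> l \<Longrightarrow> j \<le> l \<Longrightarrow> CLess i x j y \<in> Omega_l Vl l"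
  unfolding Omega_l_def by auto

lemma sat_local:
  assumes "c \<in> Omega_l Vl l" "\<forall>i\<le>l. \<sigma> (n + i) = \<sigma>' (m + i)"
  shows "sat \<sigma> n c = sat \<sigma>' m c"
  using assms unfolding Omega_l_def by auto

lemma memH:
  assumes "F \<inter> Om = {c \<in> Om. sat \<sigma> n c}" "c \<in> Om"
  shows "c \<in> F \<longleftrightarrow> sat \<sigma> n c"
proof
  assume "c \<in> F" then have "c \<in> F \<inter> Om" using assms(2) by blast
  then show "sat \<sigma> n c" using assms(1) by simp
next
  assume "sat \<sigma> n c" then have "c \<in> {c \<in> Om. sat \<sigma> n c}" using assms(2) by blast
  then show "c \<in> F" using assms(1) by blast
qed

lemma frame_split:
  assumes "Vl \<inter> Vr = {}" "lr_frame TYPE('d::linorder) Vl Vr l r F"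
  shows "\<exists>\<tau> :: nat \<Rightarrow> 'v \<Rightarrow> 'd. F \<inter> Omega_l Vl l = {c \<in> Omega_l Vl l. sat \<tau> 0 c}"
proof -
  obtain A B where AB: "l_frame TYPE('d) Vl l A" "r_frame Vr r B" "F = A \<union> B"
    using assms(2) unfolding lr_frame_def by blast
  obtain \<tau> :: "nat \<Rightarrow> 'v \<Rightarrow> 'd" where A: "A = {c \<in> Omega_l Vl l. sat \<tau> 0 c}"
    using AB(1) unfolding l_frame_def by blast
  have Bs: "B \<subseteq> Omega_r Vr r" using AB(2) unfolding r_frame_def by (elim conjE)
  have nO: "c \<notin> Omega_l Vl l" if "c \<in> Omega_r Vr r" for c
  proof
    assume "c \<in> Omega_l Vl l"
    then show False using that assms(1) unfolding Omega_r_def Omega_l_def by blast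
  qed
  have As: "A \<subseteq> Omega_l Vl l" using A by blast
  have "F \<inter> Omega_l Vl l = A" using Bs nO As AB(3) by blast
  then show ?thesis using A by (intro exI[of _ \<tau>]) simp
qed

lemma osc_shift:
  assumes "one_step_consistent Vl Vr l r F1 F2" "i < l" "j < l" "x \<in> Vl" "y \<in> Vl"
  shows "(CEq (Suc i) x (Suc j) y \<in> F1 \<longleftrightarrow> CEq i x j y \<in> F2) \<and>
         (CLess (Suc i) x (Suc j) y \<in> F1 \<longleftrightarrow> CLess i x j y \<in> F2)"
proof -
  have m1: "CEq (Suc i) x (Suc j) y \<in> Omega_l Vl l \<union> Omega_r Vr r"
    using assms by (auto intro: Omega_l_CEq)
  have m2: "CLess (Suc i) x (Suc j) y \<in> Omega_l Vl l \<union> Omega_r Vr r"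
    using assms by (auto intro: Omega_l_CLess)
  have
    e: "\<forall>x y i j. 0 < i \<and> 0 < j \<and> CEq i x j y \<in> Omega_l Vl l \<union> Omega_r Vr r \<longrightarrow>
         (CEq i x j y \<in> F1 \<longleftrightarrow> CEq (i - 1) x (j - 1) y \<in> F2)"
    by (rule conjunct1[OF assms(1)[unfolded one_step_consistent_def Let_def]])
  have lt: "\<forall>x y i j. 0 < i \<and> 0 < j \<and> CLess i x j y \<in> Omega_l Vl l \<union> Omega_r Vr r \<longrightarrow>
         (CLess i x j y \<in> F1 \<longleftrightarrow> CLess (i - 1) x (j - 1) y \<in> F2)"
    by (rule conjunct1[OF conjunct2[OF assms(1)[unfolded one_step_consistent_def Let_def]]])
  show ?thesis using e[rule_format, OF conjI[OF _ conjI[OF _ m1]]]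
      lt[rule_format, OF conjI[OF _ conjI[OF _ m2]]] by simp
qed

lemma step:
  fixes \<sigma> \<tau> :: "nat \<Rightarrow> 'v \<Rightarrow> 'd::linorder"
  assumes dd: "dense_dom TYPE('d)" and od: "open_dom TYPE('d)" and fin: "finite Vl"
    and H1: "F1 \<inter> Omega_l Vl l = {c \<in> Omega_l Vl l. sat \<sigma> n c}"
    and H2: "F2 \<inter> Omega_l Vl l = {c \<in> Omega_l Vl l. sat \<tau> 0 c}"
    and osc: "one_step_consistent Vl Vr l r F1 F2"
  shows "\<exists>\<sigma>'. (\<forall>p \<le> n + l. \<sigma>' p = \<sigma> p) \<and>
           F2 \<inter> Omega_l Vl l = {c \<in> Omega_l Vl l. sat \<sigma>' (Suc n) c}"
proof -
  define u where "u = (\<lambda>(i, x). \<tau> i x)"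
  define w where "w = (\<lambda>(i, x). \<sigma> (Suc n + i) x)"
  define P where "P = {..<l} \<times> Vl"
  define Q where "Q = {..l} \<times> Vl"
  have finP: "finite P" "finite Q" using fin unfolding P_def Q_def by auto
  have cP: "compat u w P"
    unfolding compat_def
  proof (intro ballI)
    fix p q assume "p \<in> P" "q \<in> P"
    then obtain i x j y where pq: "p = (i, x)" "q = (j, y)" "i < l" "j < l" "x \<in> Vl" "y \<in> Vl"
      unfolding P_def by auto
    have O1: "CEq (Suc i) x (Suc j) y \<in> Omega_l Vl l" "CLess (Suc i) x (Suc j) y \<in> Omega_l Vl l"
      "CEq i x j y \<in> Omega_l Vl l" "CLess i x j y \<in> Omega_l Vl l"
      using pq by (auto intro: Omega_l_CEq Omega_l_CLess)
    have s: "(CEq (Suc i) x (Suc j) y \<in> F1 \<longleftrightarrow> CEq i x j y \<in> F2) \<and>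
         (CLess (Suc i) x (Suc j) y \<in> F1 \<longleftrightarrow> CLess i x j y \<in> F2)"
      using osc_shift[OF osc pq(3-6)] .
    have a1: "CEq (Suc i) x (Suc j) y \<in> F1 \<longleftrightarrow> \<sigma> (Suc n + i) x = \<sigma> (Suc n + j) y"
      using memH[OF H1 O1(1)] by simp
    have a2: "CLess (Suc i) x (Suc j) y \<in> F1 \<longleftrightarrow> \<sigma> (Suc n + i) x < \<sigma> (Suc n + j) y"
      using memH[OF H1 O1(2)] by simp
    have a3: "CEq i x j y \<in> F2 \<longleftrightarrow> \<tau> i x = \<tau> j y"
      using memH[OF H2 O1(3)] by simp
    have a4: "CLess i x j y \<in> F2 \<longleftrightarrow> \<tau> i x < \<tau> j y"
      using memH[OF H2 O1(4)] by simp
    show "(u p = u q \<longleftrightarrow> w p = w q) \<and> (u p < u q \<longleftrightarrow> w p < w q)"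
      using s a1 a2 a3 a4 pq unfolding u_def w_def by simp
  qed
  obtain w' where w': "\<forall>p\<in>P. w' p = w p" "compat u w' (P \<union> Q)"
    using extend_set[OF dd od finP(2) finP(1) cP] by blast
  have PQ: "P \<union> Q = Q" unfolding P_def Q_def by auto
  define \<sigma>' where "\<sigma>' = (\<lambda>p. if p \<le> n + l then \<sigma> p else (\<lambda>x. w' (p - Suc n, x)))"
  have key: "\<sigma>' (Suc n + i) x = w' (i, x)" if "i \<le> l" "x \<in> Vl" for i x
  proof (cases "i < l")
    case True
    then have "(i, x) \<in> P" using that unfolding P_def by auto
    then show ?thesis using w'(1) True unfolding \<sigma>'_def w_def by auto
  next
    case False
    then show ?thesis using that unfolding \<sigma>'_def by auto
  qed
  have "F2 \<inter> Omega_l Vl l = {c \<in> Omega_l Vl l. sat \<sigma>' (Suc n) c}"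
  proof (intro set_eqI iffI)
    fix c assume c: "c \<in> F2 \<inter> Omega_l Vl l"
    then have "c \<in> Omega_l Vl l" by blast
    then obtain i x j y where ij: "i \<le> l" "j \<le> l" "x \<in> Vl" "y \<in> Vl"
      "c = CEq i x j y \<or> c = CLess i x j y" unfolding Omega_l_def by auto
    have inQ: "(i, x) \<in> Q" "(j, y) \<in> Q" using ij unfolding Q_def by auto
    have cc: "(\<tau> i x = \<tau> j y \<longleftrightarrow> w' (i, x) = w' (j, y)) \<and> (\<tau> i x < \<tau> j y \<longleftrightarrow> w' (i, x) < w' (j, y))"
      using compatD[OF w'(2)[unfolded PQ] inQ] unfolding u_def by simp
    have "sat \<tau> 0 c" using c memH[OF H2 \<open>c \<in> Omega_l Vl l\<close>] by blast
    then show "c \<in> {c \<in> Omega_l Vl l. sat \<sigma>' (Suc n) c}"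
      using ij cc key[OF ij(1,3)] key[OF ij(2,4)] \<open>c \<in> Omega_l Vl l\<close> by auto
  next
    fix c assume c: "c \<in> {c \<in> Omega_l Vl l. sat \<sigma>' (Suc n) c}"
    then have "c \<in> Omega_l Vl l" by blast
    then obtain i x j y where ij: "i \<le> l" "j \<le> l" "x \<in> Vl" "y \<in> Vl"
      "c = CEq i x j y \<or> c = CLess i x j y" unfolding Omega_l_def by auto
    have inQ: "(i, x) \<in> Q" "(j, y) \<in> Q" using ij unfolding Q_def by auto
    have cc: "(\<tau> i x = \<tau> j y \<longleftrightarrow> w' (i, x) = w' (j, y)) \<and> (\<tau> i x < \<tau> j y \<longleftrightarrow> w' (i, x) < w' (j, y))"
      using compatD[OF w'(2)[unfolded PQ] inQ] unfolding u_def by simp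
    have "sat \<tau> 0 c"
      using c ij cc key[OF ij(1,3)] key[OF ij(2,4)] by auto
    then show "c \<in> F2 \<inter> Omega_l Vl l" using memH[OF H2 \<open>c \<in> Omega_l Vl l\<close>] \<open>c \<in> Omega_l Vl l\<close> by blast
  qed
  moreover have "\<forall>p \<le> n + l. \<sigma>' p = \<sigma> p" unfolding \<sigma>'_def by auto
  ultimately show ?thesis by blast
qed

theorem lemma2p2p3:
  fixes Vl Vr :: "'v set" and l r :: nat and \<rho> :: "nat \<Rightarrow> 'v constr set"
  assumes "finite Vl" and "finite Vr" and "Vl \<inter> Vr = {}"
    and "infinite (UNIV :: 'd::linorder set)"
    and "dense_dom TYPE('d)" and "open_dom TYPE('d)"
    and "symbolic_model TYPE('d) Vl Vr l r \<rho>"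
  shows "\<exists>\<sigma> :: nat \<Rightarrow> 'v \<Rightarrow> 'd. \<forall>i.
           \<rho> i \<inter> Omega_l Vl l = {c \<in> Omega_l Vl l. sat \<sigma> i c}"
proof -
  let ?O = "Omega_l Vl l"
  have fr: "\<And>n. \<exists>\<tau> :: nat \<Rightarrow> 'v \<Rightarrow> 'd. \<rho> n \<inter> ?O = {c \<in> ?O. sat \<tau> 0 c}"
    using assms(7) frame_split[OF assms(3)] unfolding symbolic_model_def by blast
  have osc: "\<And>n. one_step_consistent Vl Vr l r (\<rho> n) (\<rho> (Suc n))"
    using assms(7) unfolding symbolic_model_def by blast
  obtain \<tau>0 :: "nat \<Rightarrow> 'v \<Rightarrow> 'd" where t0: "\<rho> 0 \<inter> ?O = {c \<in> ?O. sat \<tau>0 0 c}"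
    using fr by blast
  define nxt :: "nat \<Rightarrow> (nat \<Rightarrow> 'v \<Rightarrow> 'd) \<Rightarrow> (nat \<Rightarrow> 'v \<Rightarrow> 'd)" where
    "nxt = (\<lambda>n \<sigma>. SOME \<sigma>'. (\<forall>p\<le>n+l. \<sigma>' p = \<sigma> p) \<and> \<rho> (Suc n) \<inter> ?O = {c\<in>?O. sat \<sigma>' (Suc n) c})"
  define sq where "sq = rec_nat \<tau>0 nxt"
  have sq0: "sq 0 = \<tau>0" and sqS: "\<And>n. sq (Suc n) = nxt n (sq n)" unfolding sq_def by simp_all
  have stepn: "\<rho> n \<inter> ?O = {c \<in> ?O. sat (sq n) n c} \<Longrightarrow>
      (\<forall>p\<le>n+l. sq (Suc n) p = sq n p) \<and> \<rho> (Suc n) \<inter> ?O = {c\<in>?O. sat (sq (Suc n)) (Suc n) c}" for n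
  proof -
    assume H: "\<rho> n \<inter> ?O = {c \<in> ?O. sat (sq n) n c}"
    obtain \<tau> :: "nat \<Rightarrow> 'v \<Rightarrow> 'd" where t: "\<rho> (Suc n) \<inter> ?O = {c \<in> ?O. sat \<tau> 0 c}"
      using fr by blast
    have ex: "\<exists>\<sigma>'. (\<forall>p\<le>n+l. \<sigma>' p = sq n p) \<and> \<rho> (Suc n) \<inter> ?O = {c\<in>?O. sat \<sigma>' (Suc n) c}"
      using step[OF assms(5,6,1) H t osc] .
    show ?thesis unfolding sqS nxt_def by (rule someI_ex[OF ex])
  qed
  have inv: "\<rho> n \<inter> ?O = {c \<in> ?O. sat (sq n) n c}" for n
  proof (induction n)
    case 0 then show ?case using t0 sq0 by simp
  next
    case (Suc n) then show ?case using stepn by blast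
  qed
  have agree1: "\<forall>p\<le>n+l. sq (Suc n) p = sq n p" for n using stepn[OF inv] by blast
  have agree: "\<forall>q\<le>m+l. sq (m + k) q = sq m q" for m k
  proof (induction k)
    case 0 then show ?case by simp
  next
    case (Suc k)
    then show ?case using agree1[of "m + k"] by auto
  qed
  define \<sigma> where "\<sigma> = (\<lambda>p. sq p p)"
  have "\<rho> i \<inter> ?O = {c \<in> ?O. sat \<sigma> i c}" for i
  proof -
    have e: "\<forall>j\<le>l. sq i (i + j) = \<sigma> (i + j)"
      unfolding \<sigma>_def using agree[of i] by auto
    show ?thesis using inv[of i] sat_local[OF _ e] by auto
  qed
  then show ?thesis by blast
qed

end
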